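(* Let $q\geq3$, $\Delta\geq3$ and $0\leq B<\frac{\Delta-q}{\Delta}$. For the antiferromagnetic $q$-state Potts model with parameter $B$, the global maximum of $\Psi_1$ is not achieved at the translation invariant fixpoint, i.e., not at $\boldsymbol{\alpha}=\boldsymbol{\beta}=(1/q,\dots,1/q)$.
   Context: The Potts model with parameter $B$ has interaction matrix $\mathbf{B}$ with diagonal entries $B$ and off-diagonal entries $1$. $\Psi_1$ is defined on pairs of probability vectors by $\Psi_1(\boldsymbol{\alpha},\boldsymbol{\beta})=\max_{\mathbf{x}}[(\Delta-1)(\sum_i\alpha_i\ln\alpha_i+\sum_j\beta_j\ln\beta_j)+\Delta\sum_{i,j}x_{ij}(\ln B_{ij}-\ln x_{ij})]$ over nonnegative $\mathbf{x}\in\mathbb{R}^{q\times q}$ with row sums $\alpha_i$ and column sums $\beta_j$ (conventions $\ln0=-\infty$, $0\ln0=0$); it is the exponential growth rate of the expected weight of configurations with spin frequencies $\boldsymbol{\alpha},\boldsymbol{\beta}$ on the two sides of a random $\Delta$-regular bipartite graph. The translation invariant fixpoint of the Potts tree recursions $R_i\propto(BC_i+\sum_{j\neq i}C_j)^{\Delta-1}$, $C_j\propto(BR_j+\sum_{i\neq j}R_i)^{\Delta-1}$ is the one with all $R_i$ equal and all $C_j$ equal, corresponding to $\boldsymbol{\alpha}=\boldsymbol{\beta}=(1/q,\dots,1/q)$. *)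

theory Defs
  imports "HOL-Analysis.Analysis" "HOL-Library.Extended_Real"
begin

text \<open>Spins are indexed by {..<q}. Vectors/matrices are functions on nat, only values
 on the index range matter.\<close>

definition prob_vec :: "nat \<Rightarrow> (nat \<Rightarrow> real) \<Rightarrow> bool" where
  "prob_vec q a \<longleftrightarrow> (\<forall>i<q. 0 \<le> a i) \<and> (\<Sum>i<q. a i) = 1"

definition uniform_vec :: "nat \<Rightarrow> nat \<Rightarrow> real" where
  "uniform_vec q = (\<lambda>i. 1 / real q)"

definition potts_B :: "real \<Rightarrow> nat \<Rightarrow> nat \<Rightarrow> real" where
  "potts_B B i j = (if i = j then B else 1)"

definition xlogterm :: "real \<Rightarrow> real \<Rightarrow> ereal" where
  "xlogterm b x = (if x = 0 then 0 else if b = 0 then -\<infinity> else ereal (x * (ln b - ln x)))"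

definition couplings :: "nat \<Rightarrow> (nat \<Rightarrow> real) \<Rightarrow> (nat \<Rightarrow> real) \<Rightarrow> (nat \<Rightarrow> nat \<Rightarrow> real) set" where
  "couplings q a b = {x. (\<forall>i<q. \<forall>j<q. 0 \<le> x i j) \<and> (\<forall>i<q. (\<Sum>j<q. x i j) = a i)
                       \<and> (\<forall>j<q. (\<Sum>i<q. x i j) = b j)}"

text \<open>Psi_1 (entropy terms use 0 ln 0 = 0, which holds for Isabelle's ln since ln 0 = 0).\<close>
definition Psi1 :: "nat \<Rightarrow> nat \<Rightarrow> real \<Rightarrow> (nat \<Rightarrow> real) \<Rightarrow> (nat \<Rightarrow> real) \<Rightarrow> ereal" where
  "Psi1 q \<Delta> B a b =
     (SUP x\<in>couplings q a b.
        ereal ((real \<Delta> - 1) * ((\<Sum>i<q. a i * ln (a i)) + (\<Sum>j<q. b j * ln (b j))))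
        + ereal (real \<Delta>) * (\<Sum>i<q. \<Sum>j<q. xlogterm (potts_B B i j) (x i j)))"

end

theory Submission
  imports Defs
begin

lemma gder: fixes s :: real shows "-1 < s \<Longrightarrow> DERIV (\<lambda>s. (1+s)*ln(1+s) - s - s^2/2) s :> (ln(1+s) - s)"
proof -
  assume s: "-1 < s"
  have l: "DERIV (\<lambda>z. ln(1+z)) s :> 1/(1+s)"
    using s by (auto intro!: derivative_eq_intros)
  have p: "DERIV (\<lambda>z. (1+z)*ln(1+z)) s :> 1 * ln(1+s) + 1/(1+s) * (1+s)"
    by (rule DERIV_mult[OF _ l]) (auto intro!: derivative_eq_intros)
  have q2: "DERIV (\<lambda>z. z^2/2) s :> s"
    by (auto intro!: derivative_eq_intros)
  have d: "DERIV (\<lambda>s. (1+s)*ln(1+s) - s - s^2/2) s :> (1 * ln(1+s) + 1/(1+s) * (1+s) - 1 - s)"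
    by (intro DERIV_diff p q2 DERIV_ident)
  have e: "1 * ln(1+s) + 1/(1+s) * (1+s) - 1 - s = ln(1+s) - s" using s by simp
  show ?thesis by (rule DERIV_cong[OF d e])
qed

lemma gbound:
  fixes t :: real assumes "\<bar>t\<bar> \<le> 1/2"
  shows "\<bar>(1+t)*ln(1+t) - t - t^2/2\<bar> \<le> 2*\<bar>t\<bar>^3"
proof -
  let ?G = "\<lambda>s::real. (1+s)*ln(1+s) - s - s^2/2"
  have G0: "?G 0 = 0" by simp
  consider "t = 0" | "0 < t" | "t < 0" by linarith
  then show ?thesis
  proof cases
    case 1 then show ?thesis by simp
  next
    case 2
    obtain z where z: "0 < z" "z < t" "?G t - ?G 0 = (t - 0) * (ln(1+z) - z)"
      using MVT2[of 0 t ?G "\<lambda>s. ln(1+s) - s"] 2 assms gder by force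
    have "\<bar>ln(1+z) - z\<bar> \<le> 2*z^2" using z assms by (intro abs_ln_one_plus_x_minus_x_bound) auto
    also have "\<dots> \<le> 2*t^2" using z by (intro mult_left_mono power_mono) auto
    finally have "\<bar>t * (ln(1+z) - z)\<bar> \<le> \<bar>t\<bar> * (2*t^2)"
      by (simp add: abs_mult mult_left_mono)
    then show ?thesis using z G0 by (simp add: power3_eq_cube power2_eq_square abs_mult)
  next
    case 3
    obtain z where z: "t < z" "z < 0" "?G 0 - ?G t = (0 - t) * (ln(1+z) - z)"
      using MVT2[of t 0 ?G "\<lambda>s. ln(1+s) - s"] 3 assms gder by force
    have "\<bar>ln(1+z) - z\<bar> \<le> 2*z^2" using z assms by (intro abs_ln_one_plus_x_minus_x_bound) auto
    also have "\<dots> \<le> 2*t^2" using z by (intro mult_left_mono) (auto simp: abs_le_square_iff[symmetric])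
    finally have "\<bar>t * (ln(1+z) - z)\<bar> \<le> \<bar>t\<bar> * (2*t^2)"
      by (simp add: abs_mult mult_left_mono)
    then show ?thesis using z G0 by (simp add: power3_eq_cube power2_eq_square abs_mult abs_minus_commute)
  qed
qed

lemma potts_sym: "potts_B B i j = potts_B B j i" by (auto simp: potts_B_def)

lemma sumB: "j < q \<Longrightarrow> (\<Sum>i<q. potts_B B i j * f i) = (B - 1) * f j + (\<Sum>i<q. f i)"
proof -
  assume j: "j < q"
  have "(\<Sum>i<q. potts_B B i j * f i) = (\<Sum>i<q. f i + (if j = i then (B-1) * f j else 0))"
    by (rule sum.cong) (auto simp: potts_B_def algebra_simps)
  also have "\<dots> = (\<Sum>i<q. f i) + (B-1) * f j" using j by (simp add: sum.distrib)
  finally show ?thesis by simp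
qed

lemma sumB': "i < q \<Longrightarrow> (\<Sum>j<q. potts_B B i j * f j) = (B - 1) * f i + (\<Sum>j<q. f j)"
  using sumB[of i q B f] by (simp add: potts_sym)

lemma xlog_le:
  assumes "0 \<le> b" "0 \<le> x" "0 < Z"
  shows "xlogterm b x \<le> ereal (x * ln Z + b / Z - x)"
proof (cases "x = 0")
  case True then show ?thesis using assms by (simp add: xlogterm_def)
next
  case False
  show ?thesis
  proof (cases "b = 0")
    case True then show ?thesis using False by (simp add: xlogterm_def)
  next
    case bF: False
    have xp: "x > 0" and bp: "b > 0" using False bF assms by auto
    have "ln (b / (x*Z)) \<le> b/(x*Z) - 1" using xp bp assms by (intro ln_le_minus_one) auto
    then have "x * ln (b / (x*Z)) \<le> x * (b/(x*Z) - 1)" using xp by (intro mult_left_mono) auto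
    moreover have "ln (b / (x*Z)) = ln b - ln x - ln Z" using xp bp assms by (simp add: ln_div ln_mult)
    moreover have "x * (b/(x*Z) - 1) = b/Z - x" using xp assms by (simp add: field_simps)
    ultimately have "x * (ln b - ln x - ln Z) \<le> b/Z - x" by simp
    then have "x * (ln b - ln x) \<le> x * ln Z + b / Z - x" by (simp add: algebra_simps)
    then show ?thesis using False bF by (simp add: xlogterm_def)
  qed
qed

lemma xlog_eq: "0 \<le> b \<Longrightarrow> (b = 0 \<Longrightarrow> x = 0) \<Longrightarrow> xlogterm b x = ereal (x*(ln b - ln x))"
  by (auto simp: xlogterm_def)

lemma g_upper:
  fixes e w al :: real assumes "\<bar>e*w\<bar> \<le> 1/2" "\<bar>w\<bar> \<le> 2*al" "0 \<le> e"
  shows "(1+e*w)*ln(1+e*w) \<le> e*w + (e^2/2 + 4*e^3*al) * w^2"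
proof -
  have "(1+e*w)*ln(1+e*w) \<le> e*w + (e*w)^2/2 + 2*\<bar>e*w\<bar>^3"
    using gbound[OF assms(1)] by linarith
  moreover have "\<bar>e*w\<bar>^3 = e^3 * (\<bar>w\<bar> * w^2)" using assms(3)
    by (simp add: abs_mult power3_eq_cube power2_eq_square)
  moreover have "e^3 * (\<bar>w\<bar> * w^2) \<le> e^3 * (2*al*w^2)"
    using assms by (intro mult_left_mono mult_right_mono) auto
  ultimately show ?thesis by (simp add: algebra_simps power2_eq_square)
qed

lemma g_lower:
  fixes e vv :: real assumes "\<bar>e * vv\<bar> \<le> 1/2" "0 \<le> e"
  shows "(1+e * vv)*ln(1+e * vv) \<ge> e * vv + e^2/2 * vv^2 - 2*e^3*\<bar>vv\<bar>^3"
proof -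
  have "(1+e * vv)*ln(1+e * vv) \<ge> e * vv + (e * vv)^2/2 - 2*\<bar>e * vv\<bar>^3"
    using gbound[OF assms(1)] by linarith
  moreover have "\<bar>e * vv\<bar>^3 = e^3 * \<bar>vv\<bar>^3" using assms(2)
    by (simp add: abs_mult power_mult_distrib)
  ultimately show ?thesis by (simp add: algebra_simps power2_eq_square)
qed

theorem lemma27:
  fixes q \<Delta> :: nat and B :: real
  assumes "q \<ge> 3" and "\<Delta> \<ge> 3" and "0 \<le> B" and "B < (real \<Delta> - real q) / real \<Delta>"
  shows "\<exists>a b. prob_vec q a \<and> prob_vec q b \<and>
           Psi1 q \<Delta> B (uniform_vec q) (uniform_vec q) < Psi1 q \<Delta> B a b"
proof -
  define Q where "Q = real q"
  define D where "D = real \<Delta>"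
  define c where "c = Q - 1 + B"
  define Z where "Z = Q * c"
  define al where "al = c / Q"
  define K where "K = D * c / Q"
  define ga where "ga = (D - 1) - K"
  define e where "e = ga / (24 * D)"
  define u :: "nat \<Rightarrow> real" where "u = (\<lambda>i. if i = 0 then 1 else if i = 1 then -1 else 0)"
  have Q3: "Q \<ge> 3" and D3: "D \<ge> 3" using assms unfolding Q_def D_def by auto
  have B1: "B < 1"
  proof -
    have "Q + B * D < D" using assms(4) Q3 D3 unfolding Q_def[symmetric] D_def[symmetric]
      by (simp add: field_simps)
    then have "B * D < 1 * D" using Q3 by linarith
    then show ?thesis using D3 by (simp add: mult_less_cancel_right)
  qed
  have cpos: "c > 0" and cQ: "c < Q" using Q3 B1 assms(3) unfolding c_def by auto
  have Zpos: "Z > 0" using cpos Q3 unfolding Z_def by auto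
  have alpos: "al > 0" and al1: "al < 1" using cpos cQ Q3 unfolding al_def by auto
  have Kpos: "K > 0" using cpos Q3 D3 unfolding K_def by auto
  have KD: "K < D" using cQ cpos Q3 D3 unfolding K_def by (simp add: field_simps)
  have gapos: "ga > 0"
  proof -
    have "D * B < D - Q" using assms(4) D3 unfolding Q_def[symmetric] D_def[symmetric]
      by (simp add: field_simps)
    then have "D * c < Q * (D - 1)" unfolding c_def by (simp add: algebra_simps)
    then have "K < D - 1" using Q3 unfolding K_def by (simp add: field_simps)
    then show ?thesis unfolding ga_def by simp
  qed
  have gaD: "ga < D" using Kpos unfolding ga_def by simp
  have epos: "e > 0" using gapos D3 unfolding e_def by auto
  have esmall: "e \<le> 1/24" using gaD gapos D3 unfolding e_def by (simp add: field_simps)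
  have e12: "12 * e * D = ga / 2" using D3 unfolding e_def by (simp add: field_simps)
  have q01: "0 < q" "1 < q" using assms(1) by auto
  have u_split: "u i = (if i = 0 then 1 else 0) - (if i = 1 then 1 else 0)" for i
    unfolding u_def by auto
  have u_sum: "(\<Sum>i<q. u i) = 0"
    unfolding u_split sum_subtractf using q01 by simp
  have u_sq: "u i ^ 2 = (if i = 0 then 1 else 0) + (if i = 1 then 1 else 0)" for i
    unfolding u_def by auto
  have u_sqsum: "(\<Sum>i<q. u i ^ 2) = 2"
    unfolding u_sq sum.distrib using q01 by simp
  have u_cb: "\<bar>u i\<bar> ^ 3 = (if i = 0 then 1 else 0) + (if i = 1 then 1 else 0)" for i
    unfolding u_def by auto
  have u_cbsum: "(\<Sum>i<q. \<bar>u i\<bar> ^ 3) = 2"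
    unfolding u_cb sum.distrib using q01 by simp
  have u_abs: "\<bar>u i\<bar> \<le> 1" for i unfolding u_def by auto
  have u_diff: "\<bar>u i - u j\<bar> \<le> 2" for i j using u_abs[of i] u_abs[of j] by linarith
  have potts_nn: "0 \<le> potts_B B i j" for i j using assms(3) by (simp add: potts_B_def)
  have cardq: "card {..<q} = q" by simp
  define U where "U = uniform_vec q"
  define f0 where "f0 = (D - 1) * (- 2 * ln Q) + D * ln Z"
  have sumB_row1: "(\<Sum>j<q. potts_B B i j) = c" if "i < q" for i
    using sumB'[OF that, of B "\<lambda>_. 1"] unfolding c_def Q_def by simp
  have Uent: "(\<Sum>i<q. U i * ln (U i)) = - ln Q"
    unfolding U_def uniform_vec_def using Q3 by (simp add: ln_div Q_def)
  have upper: "Psi1 q \<Delta> B U U \<le> ereal f0"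
    unfolding Psi1_def
  proof (rule SUP_least)
    fix x assume x: "x \<in> couplings q U U"
    have xnn: "\<And>i j. i < q \<Longrightarrow> j < q \<Longrightarrow> 0 \<le> x i j" and xrow: "\<And>i. i < q \<Longrightarrow> (\<Sum>j<q. x i j) = U i"
      using x unfolding couplings_def by auto
    have "(\<Sum>i<q. \<Sum>j<q. xlogterm (potts_B B i j) (x i j))
          \<le> (\<Sum>i<q. \<Sum>j<q. ereal (x i j * ln Z + potts_B B i j / Z - x i j))"
      by (intro sum_mono xlog_le potts_nn xnn Zpos) auto
    also have "\<dots> = ereal (\<Sum>i<q. \<Sum>j<q. x i j * ln Z + potts_B B i j / Z - x i j)" by simp
    also have "(\<Sum>i<q. \<Sum>j<q. x i j * ln Z + potts_B B i j / Z - x i j)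
        = (\<Sum>i<q. (\<Sum>j<q. x i j) * ln Z + (\<Sum>j<q. potts_B B i j) / Z - (\<Sum>j<q. x i j))"
      by (simp add: sum_subtractf sum.distrib sum_distrib_right sum_divide_distrib)
    also have "\<dots> = (\<Sum>i<q. U i * ln Z + c / Z - U i)"
      by (rule sum.cong) (auto simp: xrow sumB_row1)
    also have "\<dots> = ln Z"
      using Zpos Q3 cpos unfolding U_def uniform_vec_def Z_def
      by (simp add: sum_subtractf sum.distrib field_simps Q_def)
    finally have S: "(\<Sum>i<q. \<Sum>j<q. xlogterm (potts_B B i j) (x i j)) \<le> ereal (ln Z)" .
    have "ereal (real \<Delta>) * (\<Sum>i<q. \<Sum>j<q. xlogterm (potts_B B i j) (x i j)) \<le> ereal D * ereal (ln Z)"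
      unfolding D_def by (rule ereal_mult_left_mono[OF S]) simp
    then have "ereal ((real \<Delta> - 1) * ((\<Sum>i<q. U i * ln (U i)) + (\<Sum>j<q. U j * ln (U j))))
        + ereal (real \<Delta>) * (\<Sum>i<q. \<Sum>j<q. xlogterm (potts_B B i j) (x i j))
        \<le> ereal ((D - 1) * (- ln Q + - ln Q)) + ereal D * ereal (ln Z)"
      unfolding Uent D_def[symmetric] by (rule add_left_mono)
    also have "\<dots> = ereal f0" unfolding f0_def by simp
    finally show "ereal ((real \<Delta> - 1) * ((\<Sum>i<q. U i * ln (U i)) + (\<Sum>j<q. U j * ln (U j))))
        + ereal (real \<Delta>) * (\<Sum>i<q. \<Sum>j<q. xlogterm (potts_B B i j) (x i j)) \<le> ereal f0" .
  qed
  define a where "a = (\<lambda>i. (1 + e * u i) / Q)"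
  define b where "b = (\<lambda>i. (1 + e * (- u i)) / Q)"
  define w where "w = (\<lambda>i j. al * (u i - u j))"
  define x where "x = (\<lambda>i j. potts_B B i j * (1 + e * w i j) / Z)"
  have eu: "\<bar>e * u i\<bar> \<le> 1/2" for i
  proof -
    have "\<bar>e * u i\<bar> = e * \<bar>u i\<bar>" using epos by (simp add: abs_mult)
    also have "\<dots> \<le> e * 1" using epos u_abs[of i] by (intro mult_left_mono) auto
    finally show ?thesis using esmall by simp
  qed
  have eu': "\<bar>e * (- u i)\<bar> \<le> 1/2" for i using eu[of i] by simp
  have wb: "\<bar>w i j\<bar> \<le> 2 * al" for i j
    unfolding w_def using alpos u_diff[of i j] by (simp add: abs_mult)
  have ew: "\<bar>e * w i j\<bar> \<le> 1/2" for i j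
  proof -
    have "\<bar>e * w i j\<bar> = e * \<bar>w i j\<bar>" using epos by (simp add: abs_mult)
    also have "\<dots> \<le> e * 2" using epos wb[of i j] al1 by (intro mult_left_mono) auto
    finally show ?thesis using esmall by simp
  qed
  have ew_pos: "1 + e * w i j > 0" for i j using ew[of i j] by linarith
  have ea_pos: "1 + e * u i > 0" for i using eu[of i] by linarith
  have eb_pos: "1 + e * (- u i) > 0" for i using eu'[of i] by linarith
  have Qpos: "Q > 0" using Q3 by simp
  have sumu1: "(\<Sum>i<q. 1 + e * u i) = Q" and sumu2: "(\<Sum>i<q. 1 + e * (- u i)) = Q"
    by (simp_all add: sum.distrib sum_subtractf sum_distrib_left[symmetric] u_sum Q_def)
  have pa: "prob_vec q a"
    unfolding prob_vec_def a_def using ea_pos Qpos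
    by (auto simp: sum_divide_distrib[symmetric] sumu1 less_imp_le)
  have pb: "prob_vec q b"
    unfolding prob_vec_def b_def using eb_pos Qpos
    using sumu2 by (auto simp: sum_divide_distrib[symmetric] less_imp_le)
  have row_inner: "(\<Sum>j<q. 1 + e * w i j) = Q + Q * e * al * u i" for i
  proof -
    have "(\<Sum>j<q. 1 + e * w i j) = (\<Sum>j<q. (1 + e * al * u i) - (e * al) * u j)"
      unfolding w_def by (simp add: algebra_simps)
    also have "\<dots> = Q * (1 + e * al * u i) - (e * al) * (\<Sum>j<q. u j)"
      by (simp add: sum_subtractf sum_distrib_left[symmetric] Q_def)
    finally show ?thesis using u_sum by (simp add: algebra_simps)
  qed
  have col_inner: "(\<Sum>i<q. 1 + e * w i j) = Q - Q * e * al * u j" for j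
  proof -
    have "(\<Sum>i<q. 1 + e * w i j) = (\<Sum>i<q. (1 - e * al * u j) + (e * al) * u i)"
      unfolding w_def by (simp add: algebra_simps)
    also have "\<dots> = Q * (1 - e * al * u j) + (e * al) * (\<Sum>i<q. u i)"
      by (simp add: sum.distrib sum_distrib_left[symmetric] Q_def)
    finally show ?thesis using u_sum by (simp add: algebra_simps)
  qed
  have wii: "w i i = 0" for i unfolding w_def by simp
  have xrow: "(\<Sum>j<q. x i j) = a i" if "i < q" for i
  proof -
    have "(\<Sum>j<q. x i j) = (\<Sum>j<q. potts_B B i j * (1 + e * w i j)) / Z"
      unfolding x_def by (simp add: sum_divide_distrib)
    also have "\<dots> = ((B - 1) + (Q + Q * e * al * u i)) / Z"
      using sumB'[OF that, of B "\<lambda>j. 1 + e * w i j"] by (simp add: wii row_inner)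
    also have "(B - 1) + (Q + Q * e * al * u i) = c * (1 + e * u i)"
      unfolding al_def c_def using Qpos by (simp add: field_simps)
    also have "c * (1 + e * u i) / Z = a i" unfolding a_def Z_def using Qpos cpos
      by (simp add: field_simps)
    finally show ?thesis .
  qed
  have xcol: "(\<Sum>i<q. x i j) = b j" if "j < q" for j
  proof -
    have "(\<Sum>i<q. x i j) = (\<Sum>i<q. potts_B B i j * (1 + e * w i j)) / Z"
      unfolding x_def by (simp add: sum_divide_distrib)
    also have "\<dots> = ((B - 1) + (Q - Q * e * al * u j)) / Z"
      using sumB[OF that, of B "\<lambda>i. 1 + e * w i j"] by (simp add: wii col_inner)
    also have "(B - 1) + (Q - Q * e * al * u j) = c * (1 + e * (- u j))"
      unfolding al_def c_def using Qpos by (simp add: field_simps)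
    also have "c * (1 + e * (- u j)) / Z = b j" unfolding b_def Z_def using Qpos cpos
      by (simp add: field_simps)
    finally show ?thesis .
  qed
  have xnn: "0 \<le> x i j" for i j
    unfolding x_def using potts_nn[of i j] ew_pos[of i j] Zpos by simp
  have xc: "x \<in> couplings q a b" unfolding couplings_def using xnn xrow xcol by auto
  define g :: "real \<Rightarrow> real" where "g = (\<lambda>t. (1 + t) * ln (1 + t))"
  define G where "G = (\<Sum>i<q. \<Sum>j<q. potts_B B i j * g (e * w i j))"
  have term_eq: "x i j * (ln (potts_B B i j) - ln (x i j)) = x i j * ln Z - potts_B B i j / Z * g (e * w i j)" for i j
  proof (cases "potts_B B i j = 0")
    case True then show ?thesis unfolding x_def by simp
  next
    case False
    then have bp: "potts_B B i j > 0" using potts_nn[of i j] by simp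
    have l: "ln (x i j) = ln (potts_B B i j) + ln (1 + e * w i j) - ln Z"
      unfolding x_def using bp ew_pos[of i j] Zpos by (simp add: ln_div ln_mult)
    have "x i j * (ln (potts_B B i j) - ln (x i j)) = x i j * ln Z - x i j * ln (1 + e * w i j)"
      by (simp add: l algebra_simps)
    moreover have "x i j * ln (1 + e * w i j) = potts_B B i j / Z * g (e * w i j)"
      unfolding x_def g_def by simp
    ultimately show ?thesis by simp
  qed
  have xsum: "(\<Sum>i<q. \<Sum>j<q. x i j) = 1"
    using pa unfolding prob_vec_def by (simp add: xrow)
  have Sx: "(\<Sum>i<q. \<Sum>j<q. xlogterm (potts_B B i j) (x i j)) = ereal (ln Z - G / Z)"
  proof -
    have "(\<Sum>i<q. \<Sum>j<q. xlogterm (potts_B B i j) (x i j))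
        = (\<Sum>i<q. \<Sum>j<q. ereal (x i j * (ln (potts_B B i j) - ln (x i j))))"
      by (intro sum.cong refl xlog_eq potts_nn) (simp add: x_def)
    also have "\<dots> = ereal (\<Sum>i<q. \<Sum>j<q. x i j * ln Z - potts_B B i j / Z * g (e * w i j))"
      by (simp add: term_eq)
    also have "(\<Sum>i<q. \<Sum>j<q. x i j * ln Z - potts_B B i j / Z * g (e * w i j))
        = (\<Sum>i<q. \<Sum>j<q. x i j) * ln Z - G / Z"
      unfolding G_def by (simp add: sum_subtractf sum_distrib_right sum_divide_distrib)
    finally show ?thesis using xsum by simp
  qed
  have bw0: "(\<Sum>i<q. \<Sum>j<q. potts_B B i j * w i j) = 0"
  proof -
    have "(\<Sum>j<q. potts_B B i j * w i j) = al * Q * u i" if "i < q" for i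
    proof -
      have "(\<Sum>j<q. potts_B B i j * w i j) = (\<Sum>j<q. w i j)"
        using sumB'[OF that, of B "w i"] by (simp add: wii)
      also have "\<dots> = (\<Sum>j<q. al * u i - al * u j)" unfolding w_def by (simp add: algebra_simps)
      also have "\<dots> = al * Q * u i"
        by (simp add: sum_subtractf sum_distrib_left[symmetric] u_sum Q_def)
      finally show ?thesis .
    qed
    then have "(\<Sum>i<q. \<Sum>j<q. potts_B B i j * w i j) = (\<Sum>i<q. al * Q * u i)" by simp
    also have "\<dots> = 0" by (simp add: sum_distrib_left[symmetric] u_sum)
    finally show ?thesis .
  qed
  have bw2: "(\<Sum>i<q. \<Sum>j<q. potts_B B i j * (w i j)^2) = 4 * Q * al^2"
  proof -
    have "(\<Sum>j<q. potts_B B i j * (w i j)^2) = al^2 * (Q * (u i)^2 + 2)" if "i < q" for i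
    proof -
      have "(\<Sum>j<q. potts_B B i j * (w i j)^2) = (\<Sum>j<q. (w i j)^2)"
        using sumB'[OF that, of B "\<lambda>j. (w i j)^2"] by (simp add: wii)
      also have "\<dots> = (\<Sum>j<q. al^2 * (u i)^2 - (2 * al^2 * u i) * u j + al^2 * (u j)^2)"
        unfolding w_def by (simp add: power2_eq_square algebra_simps)
      also have "\<dots> = Q * (al^2 * (u i)^2) - (2 * al^2 * u i) * (\<Sum>j<q. u j) + al^2 * (\<Sum>j<q. (u j)^2)"
        by (simp add: sum.distrib sum_subtractf sum_distrib_left[symmetric] Q_def)
      also have "\<dots> = al^2 * (Q * (u i)^2 + 2)" using u_sum u_sqsum by (simp add: algebra_simps)
      finally show ?thesis .
    qed
    then have "(\<Sum>i<q. \<Sum>j<q. potts_B B i j * (w i j)^2) = (\<Sum>i<q. al^2 * Q * (u i)^2 + 2 * al^2)"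
      by (simp add: algebra_simps)
    also have "\<dots> = al^2 * Q * 2 + Q * (2 * al^2)"
      by (simp add: sum.distrib sum_distrib_left[symmetric] u_sqsum Q_def)
    finally show ?thesis by simp
  qed
  have Gle: "G \<le> (e^2/2 + 4 * e^3 * al) * (4 * Q * al^2)"
  proof -
    have "G \<le> (\<Sum>i<q. \<Sum>j<q. potts_B B i j * (e * w i j + (e^2/2 + 4 * e^3 * al) * (w i j)^2))"
      unfolding G_def g_def
      by (intro sum_mono mult_left_mono potts_nn g_upper ew wb) (use epos in auto)
    also have "\<dots> = e * (\<Sum>i<q. \<Sum>j<q. potts_B B i j * w i j)
        + (e^2/2 + 4 * e^3 * al) * (\<Sum>i<q. \<Sum>j<q. potts_B B i j * (w i j)^2)"
      by (simp add: sum.distrib sum_distrib_left algebra_simps)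
    finally show ?thesis using bw0 bw2 by simp
  qed
  have ent: "(\<Sum>i<q. ((1 + e * v i) / Q) * ln ((1 + e * v i) / Q)) \<ge> (e^2 - 4 * e^3) / Q - ln Q"
    if v0: "(\<Sum>i<q. v i) = 0" and v2: "(\<Sum>i<q. (v i)^2) = 2" and v3: "(\<Sum>i<q. \<bar>v i\<bar>^3) = 2"
      and vb: "\<And>i. \<bar>e * v i\<bar> \<le> 1/2" for v
  proof -
    have vp: "1 + e * v i > 0" for i using vb[of i] by linarith
    have t: "((1 + e * v i) / Q) * ln ((1 + e * v i) / Q) = g (e * v i) / Q - (1 + e * v i) / Q * ln Q" for i
      using vp[of i] Qpos unfolding g_def by (simp add: ln_div algebra_simps)
    have "(\<Sum>i<q. ((1 + e * v i) / Q) * ln ((1 + e * v i) / Q))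
        = (\<Sum>i<q. g (e * v i)) / Q - ((\<Sum>i<q. 1 + e * v i) / Q) * ln Q"
      unfolding t by (simp add: sum_subtractf sum_divide_distrib sum_distrib_right)
    also have "(\<Sum>i<q. 1 + e * v i) = Q"
      by (simp add: sum.distrib sum_distrib_left[symmetric] v0 Q_def)
    finally have eq: "(\<Sum>i<q. ((1 + e * v i) / Q) * ln ((1 + e * v i) / Q)) = (\<Sum>i<q. g (e * v i)) / Q - ln Q"
      using Qpos by simp
    have "(\<Sum>i<q. g (e * v i)) \<ge> (\<Sum>i<q. e * v i + e^2/2 * (v i)^2 - 2 * e^3 * \<bar>v i\<bar>^3)"
      unfolding g_def by (intro sum_mono g_lower vb) (use epos in auto)
    also have "(\<Sum>i<q. e * v i + e^2/2 * (v i)^2 - 2 * e^3 * \<bar>v i\<bar>^3) = e^2 - 4 * e^3"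
      by (simp add: sum.distrib sum_subtractf sum_distrib_left[symmetric] sum_divide_distrib[symmetric] v0 v2 v3)
    finally have "(\<Sum>i<q. g (e * v i)) \<ge> e^2 - 4 * e^3" .
    then show ?thesis unfolding eq using Qpos by (simp add: divide_right_mono)
  qed
  have entA: "(\<Sum>i<q. a i * ln (a i)) \<ge> (e^2 - 4 * e^3) / Q - ln Q"
    unfolding a_def by (rule ent[OF u_sum u_sqsum u_cbsum eu])
  have entB: "(\<Sum>i<q. b i * ln (b i)) \<ge> (e^2 - 4 * e^3) / Q - ln Q"
    unfolding b_def by (rule ent[OF _ _ _ eu']) (simp_all add: sum_negf u_sum u_sqsum u_cbsum eu')
  define SA where "SA = (\<Sum>i<q. a i * ln (a i))"
  define SB where "SB = (\<Sum>j<q. b j * ln (b j))"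
  define f where "f = (D - 1) * (SA + SB) + D * (ln Z - G / Z)"
  have lowPsi: "ereal f \<le> Psi1 q \<Delta> B a b"
  proof -
    have "ereal ((real \<Delta> - 1) * ((\<Sum>i<q. a i * ln (a i)) + (\<Sum>j<q. b j * ln (b j))))
        + ereal (real \<Delta>) * (\<Sum>i<q. \<Sum>j<q. xlogterm (potts_B B i j) (x i j)) \<le> Psi1 q \<Delta> B a b"
      unfolding Psi1_def by (rule SUP_upper[OF xc])
    moreover have "ereal ((real \<Delta> - 1) * ((\<Sum>i<q. a i * ln (a i)) + (\<Sum>j<q. b j * ln (b j))))
        + ereal (real \<Delta>) * (\<Sum>i<q. \<Sum>j<q. xlogterm (potts_B B i j) (x i j)) = ereal f"
      unfolding Sx f_def SA_def SB_def D_def by simp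
    ultimately show ?thesis by simp
  qed
  have h1: "D * G / Z \<le> (e^2/2 + 4 * e^3 * al) * (4 * K / Q)"
  proof -
    have "D * G / Z \<le> D * ((e^2/2 + 4 * e^3 * al) * (4 * Q * al^2)) / Z"
      using Gle D3 Zpos by (intro divide_right_mono mult_left_mono) auto
    also have "\<dots> = (e^2/2 + 4 * e^3 * al) * (4 * K / Q)"
      unfolding K_def al_def Z_def using Qpos cpos by (simp add: field_simps power2_eq_square)
    finally show ?thesis .
  qed
  have h2: "(D - 1) * (e^2 - 4 * e^3) - K * (e^2 + 8 * e^3 * al) \<ge> e^2 * (ga / 2)"
  proof -
    have Kal: "K * al \<le> D" using Kpos alpos al1 KD
      by (metis less_eq_real_def mult.right_neutral mult_left_mono order_trans)
    have "e^3 * (4 * (D - 1) + 8 * (K * al)) \<le> e^3 * (12 * D)"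
      using Kal epos D3 by (intro mult_left_mono) auto
    also have "e^3 * (12 * D) = e^2 * (ga / 2)" using e12 by (simp add: power2_eq_square power3_eq_cube algebra_simps)
    finally have A: "e^3 * (4 * (D - 1) + 8 * (K * al)) \<le> e^2 * (ga / 2)" .
    have "(D - 1) * (e^2 - 4 * e^3) - K * (e^2 + 8 * e^3 * al) = e^2 * ga - e^3 * (4 * (D - 1) + 8 * (K * al))"
      unfolding ga_def by (simp add: algebra_simps)
    then show ?thesis using A by (simp add: algebra_simps)
  qed
  have fgt: "f > f0"
  proof -
    have "SA + SB + 2 * ln Q \<ge> 2 * (e^2 - 4 * e^3) / Q"
    proof -
      have "2 * (e^2 - 4 * e^3) / Q = (e^2 - 4 * e^3) / Q + (e^2 - 4 * e^3) / Q" by simp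
      then show ?thesis using entA entB unfolding SA_def SB_def by linarith
    qed
    then have "(D - 1) * (SA + SB + 2 * ln Q) \<ge> (D - 1) * (2 * (e^2 - 4 * e^3) / Q)"
      using D3 by (intro mult_left_mono) auto
    moreover have "f - f0 = (D - 1) * (SA + SB + 2 * ln Q) - D * G / Z"
      unfolding f_def f0_def by (simp add: algebra_simps)
    ultimately have "f - f0 \<ge> (D - 1) * (2 * (e^2 - 4 * e^3) / Q) - (e^2/2 + 4 * e^3 * al) * (4 * K / Q)"
      using h1 by linarith
    also have "(D - 1) * (2 * (e^2 - 4 * e^3) / Q) - (e^2/2 + 4 * e^3 * al) * (4 * K / Q)
        = (2 / Q) * ((D - 1) * (e^2 - 4 * e^3) - K * (e^2 + 8 * e^3 * al))"
      using Qpos by (simp add: field_simps)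
    also have "\<dots> \<ge> (2 / Q) * (e^2 * (ga / 2))"
      using h2 Qpos by (intro mult_left_mono) auto
    finally have "f - f0 \<ge> (2 / Q) * (e^2 * (ga / 2))" .
    moreover have "(2 / Q) * (e^2 * (ga / 2)) > 0" using Qpos epos gapos by simp
    ultimately show ?thesis by linarith
  qed
  have "Psi1 q \<Delta> B (uniform_vec q) (uniform_vec q) < Psi1 q \<Delta> B a b"
    using upper fgt lowPsi unfolding U_def
    by (meson ereal_less(3) order.strict_trans1 order.strict_trans2 less_ereal.simps(1))
  then show ?thesis using pa pb by blast
qed

end
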